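(* Let $A$ be a real $m\times n$ matrix with $\|A\|_\infty\le1$. Then there exist a sequence of partitions $\{\mathcal P_j\}_{j\ge1}$ of $\{1,\dots,m\}$ and a sequence of partitions $\{\mathcal Q_j\}_{j\ge1}$ of $\{1,\dots,n\}$ such that for each $j\ge1$: (1) $\mathcal P_{j+1}$ refines $\mathcal P_j$ and $\mathcal Q_{j+1}$ refines $\mathcal Q_j$; (2) $|\mathcal P_j|$ and $|\mathcal Q_j|$ are at most $(2^{j+2}j)^{j^2}$; (3) $\|A-A^{\mathcal P_j,\mathcal Q_j}\|_\Box\le 2j^{-1}+6j^32^{-j}$.
   Context: $\|A\|_\infty=\max|a_{ij}|$; $\|A\|_\Box=\frac1{mn}\max\{|x^TAy|:x\in\mathbb{R}^m,y\in\mathbb{R}^n,\|x\|_\infty\le1,\|y\|_\infty\le1\}$. For a partition $\mathcal P$ of the row indices and $\mathcal Q$ of the column indices, the blocks are the sets $S\times T$ with $S\in\mathcal P$, $T\in\mathcal Q$, and $A^{\mathcal P,\mathcal Q}$ is the matrix obtained from $A$ by replacing every entry in each block by the average of the entries of $A$ in that block. *)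

theory Defs
  imports "HOL-Library.Disjoint_Sets" Complex_Main
begin

text \<open>Real m x n matrices are functions nat => nat => real; rows indexed by {0..<m},
  columns by {0..<n} (i.e. 0-based rendering of {1..m}, {1..n}).\<close>

definition max_norm :: "nat \<Rightarrow> nat \<Rightarrow> (nat \<Rightarrow> nat \<Rightarrow> real) \<Rightarrow> real" where
  "max_norm m n A = Max ({\<bar>A i k\<bar> | i k. i < m \<and> k < n} \<union> {0})"

definition cut_norm :: "nat \<Rightarrow> nat \<Rightarrow> (nat \<Rightarrow> nat \<Rightarrow> real) \<Rightarrow> real" where
  "cut_norm m n A = (1 / (real m * real n)) *
     Sup {\<bar>\<Sum>i<m. \<Sum>k<n. x i * A i k * y k\<bar> | x y.
            (\<forall>i<m. \<bar>x i\<bar> \<le> 1) \<and> (\<forall>k<n. \<bar>y k\<bar> \<le> 1)}"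

definition block_avg :: "nat set set \<Rightarrow> nat set set \<Rightarrow> (nat \<Rightarrow> nat \<Rightarrow> real) \<Rightarrow> nat \<Rightarrow> nat \<Rightarrow> real" where
  "block_avg P Q A i k =
     (let S = (THE S. S \<in> P \<and> i \<in> S); T = (THE T. T \<in> Q \<and> k \<in> T) in
        (\<Sum>a\<in>S. \<Sum>b\<in>T. A a b) / (real (card S) * real (card T)))"

definition refines :: "'a set set \<Rightarrow> 'a set set \<Rightarrow> bool" where
  "refines P' P \<longleftrightarrow> (\<forall>S'\<in>P'. \<exists>S\<in>P. S' \<subseteq> S)"

end

theory Submission
  imports Defs
begin


lemma the_part:
  assumes "partition_on I P" "S \<in> P" "i \<in> S"
  shows "(THE S. S \<in> P \<and> i \<in> S) = S"
proof (rule the_equality)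
  show "S \<in> P \<and> i \<in> S" using assms by auto
  fix S' assume "S' \<in> P \<and> i \<in> S'"
  then show "S' = S" using assms partition_onD2[OF assms(1)]
    by (meson disjointD disjoint_iff)
qed

lemma sum_part:
  assumes "partition_on I P" "finite I"
  shows "(\<Sum>i\<in>I. f i) = (\<Sum>S\<in>P. \<Sum>i\<in>S. f i)"
proof -
  have fP: "finite P" using finite_elements assms by blast
  have I: "I = \<Union>P" using partition_onD1[OF assms(1)] .
  have fin: "\<forall>S\<in>P. finite S" using assms I by (meson Union_upper finite_subset)
  have dis: "\<forall>A\<in>P. \<forall>B\<in>P. A \<noteq> B \<longrightarrow> A \<inter> B = {}"
    using partition_onD2[OF assms(1)] by (meson disjointD)
  show ?thesis unfolding I using sum.Union_disjoint[OF fin dis] by simp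
qed

definition stepf :: "nat set set \<Rightarrow> nat set set \<Rightarrow> (nat \<Rightarrow> nat \<Rightarrow> real) \<Rightarrow> bool" where
  "stepf P Q F \<longleftrightarrow> (\<forall>S\<in>P. \<forall>T\<in>Q. \<forall>i\<in>S. \<forall>i'\<in>S. \<forall>k\<in>T. \<forall>k'\<in>T. F i k = F i' k')"

lemma orth:
  assumes P: "partition_on {0..<m} P" and Q: "partition_on {0..<n} Q" and F: "stepf P Q F"
  shows "(\<Sum>i\<in>{0..<m}. \<Sum>k\<in>{0..<n}. (M i k - block_avg P Q M i k) * F i k) = 0"
proof -
  have fS: "finite S" if "S \<in> P" for S using P that
    by (metis Union_upper finite_atLeastLessThan finite_subset partition_onD1)
  have fT: "finite T" if "T \<in> Q" for T using Q that
    by (metis Union_upper finite_atLeastLessThan finite_subset partition_onD1)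
  have "(\<Sum>i\<in>{0..<m}. \<Sum>k\<in>{0..<n}. (M i k - block_avg P Q M i k) * F i k)
      = (\<Sum>S\<in>P. \<Sum>i\<in>S. \<Sum>T\<in>Q. \<Sum>k\<in>T. (M i k - block_avg P Q M i k) * F i k)"
    using sum_part[OF P, of "\<lambda>i. \<Sum>T\<in>Q. \<Sum>k\<in>T. (M i k - block_avg P Q M i k) * F i k"]
    by (simp add: sum_part[OF Q])
  also have "\<dots> = (\<Sum>S\<in>P. \<Sum>T\<in>Q. \<Sum>i\<in>S. \<Sum>k\<in>T. (M i k - block_avg P Q M i k) * F i k)"
    by (rule sum.cong[OF refl], rule sum.swap)
  also have "\<dots> = 0"
  proof (rule sum.neutral, rule ballI, rule sum.neutral, rule ballI)
    fix S T assume S: "S \<in> P" and T: "T \<in> Q"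
    obtain i0 where i0: "i0 \<in> S" using S partition_onD3[OF P] by (metis all_not_in_conv)
    obtain k0 where k0: "k0 \<in> T" using T partition_onD3[OF Q] by (metis all_not_in_conv)
    define c where "c = (\<Sum>a\<in>S. \<Sum>b\<in>T. M a b) / (real (card S) * real (card T))"
    have cS: "card S > 0" using fS[OF S] i0 card_gt_0_iff by blast
    have cT: "card T > 0" using fT[OF T] k0 card_gt_0_iff by blast
    have "(\<Sum>i\<in>S. \<Sum>k\<in>T. (M i k - block_avg P Q M i k) * F i k)
        = (\<Sum>i\<in>S. \<Sum>k\<in>T. (M i k - c) * F i0 k0)"
    proof (rule sum.cong[OF refl], rule sum.cong[OF refl])
      fix i k assume i: "i \<in> S" and k: "k \<in> T"
      have "F i k = F i0 k0" using F S T i0 k0 i k unfolding stepf_def by blast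
      moreover have "block_avg P Q M i k = c"
        unfolding block_avg_def c_def Let_def the_part[OF P S i] the_part[OF Q T k] ..
      ultimately show "(M i k - block_avg P Q M i k) * F i k = (M i k - c) * F i0 k0" by simp
    qed
    also have "\<dots> = F i0 k0 * ((\<Sum>i\<in>S. \<Sum>k\<in>T. M i k) - real (card S) * real (card T) * c)"
      by (simp add: sum_distrib_left sum_subtractf algebra_simps)
    also have "\<dots> = 0" using cS cT unfolding c_def by simp
    finally show "(\<Sum>i\<in>S. \<Sum>k\<in>T. (M i k - block_avg P Q M i k) * F i k) = 0" .
  qed
  finally show ?thesis .
qed

lemma avg_step:
  assumes P: "partition_on {0..<m} P" and Q: "partition_on {0..<n} Q"
  shows "stepf P Q (block_avg P Q M)"
  unfolding stepf_def block_avg_def Let_def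
  by (simp add: the_part[OF P] the_part[OF Q])

lemma step_refine:
  assumes "stepf P Q F" "refines P' P" "refines Q' Q"
  shows "stepf P' Q' F"
  using assms unfolding stepf_def refines_def by (meson subsetD)


definition ip :: "nat \<Rightarrow> nat \<Rightarrow> (nat \<Rightarrow> nat \<Rightarrow> real) \<Rightarrow> (nat \<Rightarrow> nat \<Rightarrow> real) \<Rightarrow> real" where
  "ip m n F G = (\<Sum>i\<in>{0..<m}. \<Sum>k\<in>{0..<n}. F i k * G i k)"

lemma ip_diff_left: "ip m n (\<lambda>i k. X i k - Y i k) Z = ip m n X Z - ip m n Y Z"
  by (simp add: ip_def left_diff_distrib sum_subtractf)
lemma ip_comm: "ip m n X Y = ip m n Y X"
  by (simp add: ip_def mult.commute)
lemma ip_diff_right: "ip m n Z (\<lambda>i k. X i k - Y i k) = ip m n Z X - ip m n Z Y"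
  by (metis ip_comm ip_diff_left)
lemma ip_scale_left: "ip m n (\<lambda>i k. c * X i k) Z = c * ip m n X Z"
  by (simp add: ip_def sum_distrib_left mult.assoc)
lemma ip_scale_right: "ip m n Z (\<lambda>i k. c * X i k) = c * ip m n Z X"
  by (metis ip_comm ip_scale_left)
lemma ip_nonneg: "ip m n X X \<ge> 0"
  by (simp add: ip_def sum_nonneg)

lemma increment:
  fixes A F :: "nat \<Rightarrow> nat \<Rightarrow> real"
  assumes P: "partition_on {0..<m} P" and Q: "partition_on {0..<n} Q"
    and P': "partition_on {0..<m} P'" and Q': "partition_on {0..<n} Q'"
    and rP: "refines P' P" and rQ: "refines Q' Q"
    and F: "stepf P' Q' F" and FF: "ip m n F F = real m * real n"
    and big: "ip m n (\<lambda>i k. A i k - block_avg P Q A i k) F > \<epsilon> * (real m * real n)"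
    and e: "\<epsilon> > 0"
  shows "ip m n (block_avg P' Q' A) (block_avg P' Q' A)
       \<ge> ip m n (block_avg P Q A) (block_avg P Q A) + \<epsilon>^2 * (real m * real n)"
proof -
  define G where "G = block_avg P Q A"
  define G' where "G' = block_avg P' Q' A"
  have sG: "stepf P Q G" unfolding G_def by (rule avg_step[OF P Q])
  have sG2: "stepf P' Q' G" by (rule step_refine[OF sG rP rQ])
  have sG': "stepf P' Q' G'" unfolding G'_def by (rule avg_step[OF P' Q'])
  have o: "ip m n (\<lambda>i k. A i k - block_avg P Q A i k) H = 0" if "stepf P Q H" for H
    using orth[OF P Q that] unfolding ip_def by simp
  have o': "ip m n (\<lambda>i k. A i k - block_avg P' Q' A i k) H = 0" if "stepf P' Q' H" for H
    using orth[OF P' Q' that] unfolding ip_def by simp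
  have K1: "ip m n A G - ip m n G G = 0" using o[OF sG] unfolding G_def ip_diff_left .
  have K2: "ip m n A G - ip m n G' G = 0" using o'[OF sG2] unfolding G'_def ip_diff_left .
  have K4: "ip m n A F - ip m n G' F = 0" using o'[OF F] unfolding G'_def ip_diff_left .
  have K5: "ip m n A F - ip m n G F > \<epsilon> * (real m * real n)" using big unfolding G_def ip_diff_left .
  have K7: "0 \<le> ip m n (\<lambda>i k. G' i k - G i k - \<epsilon> * F i k) (\<lambda>i k. G' i k - G i k - \<epsilon> * F i k)"
    by (rule ip_nonneg)
  also have "\<dots> = ip m n G' G' + ip m n G G + \<epsilon>^2 * ip m n F F - 2 * ip m n G' G
      - 2 * \<epsilon> * ip m n G' F + 2 * \<epsilon> * ip m n G F"
    unfolding ip_diff_left ip_diff_right ip_scale_left ip_scale_right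
    using ip_comm[of m n G G'] ip_comm[of m n F G'] ip_comm[of m n F G]
    by (simp add: power2_eq_square algebra_simps)
  finally have K7': "0 \<le> ip m n G' G' + ip m n G G + \<epsilon>^2 * ip m n F F - 2 * ip m n G' G
      - 2 * \<epsilon> * ip m n G' F + 2 * \<epsilon> * ip m n G F" .
  have "\<epsilon> * (ip m n G' F - ip m n G F) \<ge> \<epsilon> * (\<epsilon> * (real m * real n))"
    using K4 K5 e by (intro mult_left_mono) auto
  then show ?thesis using K7' K1 K2 FF unfolding G_def[symmetric] G'_def[symmetric]
    by (simp add: power2_eq_square algebra_simps)
qed

lemma energy_bound:
  assumes P: "partition_on {0..<m} P" and Q: "partition_on {0..<n} Q"
    and A: "\<And>i k. i < m \<Longrightarrow> k < n \<Longrightarrow> \<bar>A i k\<bar> \<le> 1"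
  shows "ip m n (block_avg P Q A) (block_avg P Q A) \<le> real m * real n"
proof -
  define G where "G = block_avg P Q A"
  have sG: "stepf P Q G" unfolding G_def by (rule avg_step[OF P Q])
  have K1: "ip m n A G - ip m n G G = 0"
    using orth[OF P Q sG] unfolding ip_def G_def by (simp add: left_diff_distrib sum_subtractf)
  have "0 \<le> ip m n (\<lambda>i k. A i k - G i k) (\<lambda>i k. A i k - G i k)" by (rule ip_nonneg)
  also have "\<dots> = ip m n A A - 2 * ip m n A G + ip m n G G"
    unfolding ip_diff_left ip_diff_right using ip_comm[of m n G A] by simp
  finally have 1: "ip m n G G \<le> ip m n A A" using K1 by simp
  have "ip m n A A \<le> (\<Sum>i\<in>{0..<m}. \<Sum>k\<in>{0..<n}. 1)"
    unfolding ip_def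
  proof (intro sum_mono)
    fix i k assume "i \<in> {0..<m}" "k \<in> {0..<n}"
    then have "\<bar>A i k\<bar> \<le> 1" using A by simp
    then show "A i k * A i k \<le> 1"
      by (metis abs_ge_zero abs_mult abs_mult_self_eq mult_le_one)
  qed
  then show ?thesis using 1 unfolding G_def by simp
qed


definition splitp :: "nat set set \<Rightarrow> nat set \<Rightarrow> nat set set" where
  "splitp P S = ((\<lambda>X. X \<inter> S) ` P \<union> (\<lambda>X. X - S) ` P) - {{}}"

lemma splitp_part:
  assumes P: "partition_on I P"
  shows "partition_on I (splitp P S)"
proof (rule partition_onI)
  show "\<Union> (splitp P S) = I" using partition_onD1[OF P] unfolding splitp_def by blast
  show "{} \<notin> splitp P S" unfolding splitp_def by blast
  fix p q assume p: "p \<in> splitp P S" and q: "q \<in> splitp P S" and pq: "p \<noteq> q"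
  have dis: "X = Y \<or> X \<inter> Y = {}" if "X \<in> P" "Y \<in> P" for X Y
    using partition_onD2[OF P] that by (meson disjointD)
  from p q pq show "disjnt p q" unfolding splitp_def disjnt_def
    using dis by blast
qed

lemma splitp_refines: "refines (splitp P S) P"
  unfolding refines_def splitp_def by blast

lemma splitp_card:
  assumes "finite P"
  shows "card (splitp P S) \<le> 2 * card P"
proof -
  have "card (splitp P S) \<le> card ((\<lambda>X. X \<inter> S) ` P \<union> (\<lambda>X. X - S) ` P)"
    unfolding splitp_def using assms by (intro card_mono) auto
  also have "\<dots> \<le> card ((\<lambda>X. X \<inter> S) ` P) + card ((\<lambda>X. X - S) ` P)" by (rule card_Un_le)
  also have "\<dots> \<le> card P + card P" by (intro add_mono card_image_le assms)
  finally show ?thesis by simp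
qed

lemma splitp_blocks: "X \<in> splitp P S \<Longrightarrow> X \<subseteq> S \<or> X \<inter> S = {}"
  unfolding splitp_def by blast

definition sg :: "real \<Rightarrow> real" where "sg c = (if c \<ge> 0 then 1 else -1)"

lemma sg_bound: assumes "\<bar>y\<bar> \<le> 1" shows "y * c \<le> sg c * c"
proof -
  have "y * c \<le> \<bar>y * c\<bar>" by simp
  also have "\<dots> = \<bar>y\<bar> * \<bar>c\<bar>" by (simp add: abs_mult)
  also have "\<dots> \<le> 1 * \<bar>c\<bar>" using assms by (intro mult_right_mono) auto
  also have "\<dots> = sg c * c" unfolding sg_def by auto
  finally show ?thesis .
qed

lemma sg_cases: "sg c = 1 \<or> sg c = -1" unfolding sg_def by auto

lemma sg_sq: "sg c * sg c = 1" unfolding sg_def by auto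


lemma exists_refinement:
  fixes A :: "nat \<Rightarrow> nat \<Rightarrow> real"
  assumes P: "partition_on {0..<m} P" and Q: "partition_on {0..<n} Q"
    and m: "m \<ge> 1" and n: "n \<ge> 1" and e: "\<epsilon> > 0"
    and cut: "cut_norm m n (\<lambda>i k. A i k - block_avg P Q A i k) > \<epsilon>"
  shows "\<exists>P' Q'. partition_on {0..<m} P' \<and> partition_on {0..<n} Q' \<and>
     refines P' P \<and> refines Q' Q \<and> card P' \<le> 2 * card P \<and> card Q' \<le> 2 * card Q \<and>
     ip m n (block_avg P' Q' A) (block_avg P' Q' A)
       \<ge> ip m n (block_avg P Q A) (block_avg P Q A) + \<epsilon>^2 * (real m * real n)"
proof -
  define B where "B = (\<lambda>i k. A i k - block_avg P Q A i k)"
  define X where "X = {\<bar>\<Sum>i<m. \<Sum>k<n. x i * B i k * y k\<bar> | x y.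
            (\<forall>i<m. \<bar>x i\<bar> \<le> (1::real)) \<and> (\<forall>k<n. \<bar>y k\<bar> \<le> (1::real))}"
  have mn: "real m * real n > 0" using m n by simp
  have "(1 / (real m * real n)) * Sup X > \<epsilon>" using cut unfolding cut_norm_def B_def X_def .
  then have "Sup X > \<epsilon> * (real m * real n)" using mn by (simp add: field_simps)
  moreover have "X \<noteq> {}"
  proof -
    have "\<bar>\<Sum>i<m. \<Sum>k<n. (\<lambda>_. 0) i * B i k * (\<lambda>_. 0) k\<bar> \<in> X" unfolding X_def
      by (rule CollectI, rule exI[of _ "\<lambda>_. 0"], rule exI[of _ "\<lambda>_. 0"]) simp
    then show ?thesis by blast
  qed
  ultimately obtain t where "t \<in> X" "t > \<epsilon> * (real m * real n)" using less_cSupD by blast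
  then obtain x y where x: "\<forall>i<m. \<bar>x i\<bar> \<le> 1" and y: "\<forall>k<n. \<bar>y k\<bar> \<le> 1"
    and xy: "\<bar>\<Sum>i<m. \<Sum>k<n. x i * B i k * y k\<bar> > \<epsilon> * (real m * real n)"
    unfolding X_def by blast
  obtain x1 where x1: "\<forall>i<m. \<bar>x1 i\<bar> \<le> 1"
    and xy1: "(\<Sum>i<m. \<Sum>k<n. x1 i * B i k * y k) > \<epsilon> * (real m * real n)"
  proof (cases "(\<Sum>i<m. \<Sum>k<n. x i * B i k * y k) \<ge> 0")
    case True then show ?thesis using that[of x] x xy by simp
  next
    case False
    have "(\<Sum>i<m. \<Sum>k<n. (- x i) * B i k * y k) = - (\<Sum>i<m. \<Sum>k<n. x i * B i k * y k)"
      by (simp add: sum_negf)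
    then show ?thesis using that[of "\<lambda>i. - x i"] x xy False by simp
  qed
  define y' where "y' = (\<lambda>k. sg (\<Sum>i<m. x1 i * B i k))"
  define x' where "x' = (\<lambda>i. sg (\<Sum>k<n. B i k * y' k))"
  have "(\<Sum>i<m. \<Sum>k<n. x1 i * B i k * y k) = (\<Sum>k<n. y k * (\<Sum>i<m. x1 i * B i k))"
    by (subst sum.swap) (simp add: sum_distrib_left algebra_simps)
  also have "\<dots> \<le> (\<Sum>k<n. y' k * (\<Sum>i<m. x1 i * B i k))"
    unfolding y'_def using y by (intro sum_mono sg_bound) auto
  also have "\<dots> = (\<Sum>i<m. x1 i * (\<Sum>k<n. B i k * y' k))"
    unfolding sum_distrib_left by (rule sum.swap[THEN trans]) (simp add: ac_simps)
  also have "\<dots> \<le> (\<Sum>i<m. x' i * (\<Sum>k<n. B i k * y' k))"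
    unfolding x'_def using x1 by (intro sum_mono sg_bound) auto
  finally have big0: "(\<Sum>i<m. x' i * (\<Sum>k<n. B i k * y' k)) > \<epsilon> * (real m * real n)"
    using xy1 by simp
  define F where "F = (\<lambda>i k. x' i * y' k)"
  have big: "ip m n B F > \<epsilon> * (real m * real n)"
  proof -
    have "ip m n B F = (\<Sum>i<m. x' i * (\<Sum>k<n. B i k * y' k))"
      unfolding ip_def F_def by (simp add: atLeast0LessThan sum_distrib_left algebra_simps)
    then show ?thesis using big0 by simp
  qed
  have FF: "ip m n F F = real m * real n"
  proof -
    have "F i k * F i k = 1" for i k
    proof -
      have "F i k * F i k = (x' i * x' i) * (y' k * y' k)" unfolding F_def by (simp add: ac_simps)
      also have "\<dots> = 1" unfolding x'_def y'_def using sg_sq by simp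
      finally show ?thesis .
    qed
    then show ?thesis unfolding ip_def by simp
  qed
  define S where "S = {i. x' i = 1}"
  define T where "T = {k. y' k = 1}"
  define P' where "P' = splitp P S"
  define Q' where "Q' = splitp Q T"
  have P': "partition_on {0..<m} P'" unfolding P'_def by (rule splitp_part[OF P])
  have Q': "partition_on {0..<n} Q'" unfolding Q'_def by (rule splitp_part[OF Q])
  have rP: "refines P' P" unfolding P'_def by (rule splitp_refines)
  have rQ: "refines Q' Q" unfolding Q'_def by (rule splitp_refines)
  have cP: "card P' \<le> 2 * card P" unfolding P'_def
    by (rule splitp_card) (rule finite_elements[OF _ P], simp)
  have cQ: "card Q' \<le> 2 * card Q" unfolding Q'_def
    by (rule splitp_card) (rule finite_elements[OF _ Q], simp)
  have xpm: "x' i = 1 \<or> x' i = -1" for i unfolding x'_def by (rule sg_cases)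
  have ypm: "y' i = 1 \<or> y' i = -1" for i unfolding y'_def by (rule sg_cases)
  have xc: "x' i = x' i'" if "Z \<in> P'" "i \<in> Z" "i' \<in> Z" for Z i i'
  proof -
    from splitp_blocks[OF that(1)[unfolded P'_def]] show ?thesis
    proof
      assume "Z \<subseteq> S" then have "i \<in> S" "i' \<in> S" using that by auto
      then show ?thesis unfolding S_def by simp
    next
      assume "Z \<inter> S = {}" then have "x' i \<noteq> 1" "x' i' \<noteq> 1" using that unfolding S_def by auto
      then show ?thesis using xpm[of i] xpm[of i'] by simp
    qed
  qed
  have yc: "y' k = y' k'" if "Z \<in> Q'" "k \<in> Z" "k' \<in> Z" for Z k k'
  proof -
    from splitp_blocks[OF that(1)[unfolded Q'_def]] show ?thesis
    proof
      assume "Z \<subseteq> T" then have "k \<in> T" "k' \<in> T" using that by auto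
      then show ?thesis unfolding T_def by simp
    next
      assume "Z \<inter> T = {}" then have "y' k \<noteq> 1" "y' k' \<noteq> 1" using that unfolding T_def by auto
      then show ?thesis using ypm[of k] ypm[of k'] by simp
    qed
  qed
  have F: "stepf P' Q' F" unfolding stepf_def F_def
  proof (intro ballI)
    fix Z W i i' k k' assume "Z \<in> P'" "W \<in> Q'" "i \<in> Z" "i' \<in> Z" "k \<in> W" "k' \<in> W"
    then show "x' i * y' k = x' i' * y' k'" using xc yc by metis
  qed
  show ?thesis
    using increment[OF P Q P' Q' rP rQ F FF big[unfolded B_def] e] P' Q' rP rQ cP cQ by blast
qed


lemma refines_refl': "refines P P" unfolding refines_def by blast
lemma refines_trans': "refines P Q \<Longrightarrow> refines Q R \<Longrightarrow> refines P R"
  unfolding refines_def by (meson order_trans)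

definition valid :: "nat \<Rightarrow> nat \<Rightarrow> nat set set \<times> nat set set \<Rightarrow> bool" where
  "valid m n s \<longleftrightarrow> partition_on {0..<m} (fst s) \<and> partition_on {0..<n} (snd s)"
definition CN where
  "CN m n A s = cut_norm m n (\<lambda>i k. A i k - block_avg (fst s) (snd s) A i k)"
definition En where
  "En m n A s = ip m n (block_avg (fst s) (snd s) A) (block_avg (fst s) (snd s) A)"
definition good where
  "good m n A \<epsilon> s s' \<longleftrightarrow> valid m n s' \<and> refines (fst s') (fst s) \<and> refines (snd s') (snd s) \<and>
     card (fst s') \<le> 2 * card (fst s) \<and> card (snd s') \<le> 2 * card (snd s) \<and>
     En m n A s' \<ge> En m n A s + \<epsilon>^2 * (real m * real n)"
definition stp where
  "stp m n A \<epsilon> s = (if CN m n A s \<le> \<epsilon> then s else (SOME s'. good m n A \<epsilon> s s'))"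

primrec seqp :: "nat \<Rightarrow> nat \<Rightarrow> (nat \<Rightarrow> nat \<Rightarrow> real) \<Rightarrow> nat \<Rightarrow> nat set set \<times> nat set set" where
  "seqp m n A 0 = ({{0..<m}}, {{0..<n}})"
| "seqp m n A (Suc j) = (stp m n A (2 / real (Suc j)) ^^ ((Suc j)^2)) (seqp m n A j)"

lemma stp_good:
  assumes "valid m n s" "m \<ge> 1" "n \<ge> 1" "\<epsilon> > 0" "\<not> CN m n A s \<le> \<epsilon>"
  shows "good m n A \<epsilon> s (stp m n A \<epsilon> s)"
proof -
  obtain P Q where s: "s = (P, Q)" by fastforce
  have "\<exists>s'. good m n A \<epsilon> s s'"
    using exists_refinement[of m P n Q \<epsilon> A] assms unfolding s valid_def CN_def good_def En_def
    by force
  then show ?thesis unfolding stp_def using assms(5) by (simp add: someI_ex)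
qed

lemma stp_iter:
  assumes v: "valid m n s" and m: "m \<ge> 1" and n: "n \<ge> 1" and e: "\<epsilon> > 0"
  shows "valid m n ((stp m n A \<epsilon> ^^ k) s) \<and> refines (fst ((stp m n A \<epsilon> ^^ k) s)) (fst s)
    \<and> refines (snd ((stp m n A \<epsilon> ^^ k) s)) (snd s)
    \<and> card (fst ((stp m n A \<epsilon> ^^ k) s)) \<le> 2 ^ k * card (fst s)
    \<and> card (snd ((stp m n A \<epsilon> ^^ k) s)) \<le> 2 ^ k * card (snd s)
    \<and> (CN m n A ((stp m n A \<epsilon> ^^ k) s) \<le> \<epsilon> \<or>
       En m n A ((stp m n A \<epsilon> ^^ k) s) \<ge> En m n A s + real k * (\<epsilon>^2 * (real m * real n)))"
proof (induction k)
  case 0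
  then show ?case using v by (simp add: refines_refl')
next
  case (Suc k)
  define t where "t = (stp m n A \<epsilon> ^^ k) s"
  have IH: "valid m n t \<and> refines (fst t) (fst s) \<and> refines (snd t) (snd s)
    \<and> card (fst t) \<le> 2 ^ k * card (fst s) \<and> card (snd t) \<le> 2 ^ k * card (snd s)
    \<and> (CN m n A t \<le> \<epsilon> \<or> En m n A t \<ge> En m n A s + real k * (\<epsilon>^2 * (real m * real n)))"
    using Suc.IH unfolding t_def .
  have eq: "(stp m n A \<epsilon> ^^ Suc k) s = stp m n A \<epsilon> t" unfolding t_def by simp
  show ?case
  proof (cases "CN m n A t \<le> \<epsilon>")
    case True
    then have "stp m n A \<epsilon> t = t" unfolding stp_def by simp
    then show ?thesis unfolding eq using IH True by (auto intro: order_trans)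
  next
    case False
    have g: "good m n A \<epsilon> t (stp m n A \<epsilon> t)" using stp_good[OF _ m n e False] IH by blast
    have c1: "card (fst (stp m n A \<epsilon> t)) \<le> 2 ^ Suc k * card (fst s)"
      using g IH unfolding good_def by (metis (no_types, lifting) mult.assoc mult_le_mono2 order_trans power_Suc)
    have c2: "card (snd (stp m n A \<epsilon> t)) \<le> 2 ^ Suc k * card (snd s)"
      using g IH unfolding good_def by (metis (no_types, lifting) mult.assoc mult_le_mono2 order_trans power_Suc)
    have "En m n A (stp m n A \<epsilon> t) \<ge> En m n A s + real (Suc k) * (\<epsilon>^2 * (real m * real n))"
      using g IH False unfolding good_def by (simp add: algebra_simps)
    then show ?thesis unfolding eq using g IH c1 c2 unfolding good_def
      by (meson refines_trans')
  qed
qed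

lemma maxnorm_entry:
  assumes "max_norm m n A \<le> 1" "i < m" "k < n"
  shows "\<bar>A i k\<bar> \<le> 1"
proof -
  have fin: "finite ({\<bar>A i k\<bar> | i k. i < m \<and> k < n} \<union> {0})"
  proof -
    have "{\<bar>A i k\<bar> | i k. i < m \<and> k < n} \<subseteq> (\<lambda>(i,k). \<bar>A i k\<bar>) ` ({..<m} \<times> {..<n})" by force
    then show ?thesis by (meson finite_SigmaI finite_Un finite_imageI finite_insert finite_lessThan finite_subset finite.emptyI)
  qed
  have "\<bar>A i k\<bar> \<le> max_norm m n A" unfolding max_norm_def
    by (rule Max_ge[OF fin]) (use assms in blast)
  then show ?thesis using assms by simp
qed

lemma seqp_props:
  assumes m: "m \<ge> 1" and n: "n \<ge> 1" and A: "max_norm m n A \<le> 1"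
  shows "valid m n (seqp m n A j) \<and> card (fst (seqp m n A j)) \<le> 2 ^ (j^3)
     \<and> card (snd (seqp m n A j)) \<le> 2 ^ (j^3)"
proof (induction j)
  case 0
  have "partition_on {0..<m} {{0..<m}}" "partition_on {0..<n} {{0..<n}}"
    using m n by (auto intro!: partition_on_space)
  then show ?case by (simp add: valid_def)
next
  case (Suc j)
  define \<epsilon> where "\<epsilon> = 2 / real (Suc j)"
  have e: "\<epsilon> > 0" unfolding \<epsilon>_def by simp
  note it = stp_iter[OF conjunct1[OF Suc.IH] m n e, where A=A and k="(Suc j)^2"]
  have ex: "2 ^ (Suc j)^2 * 2 ^ (j^3) \<le> (2::nat) ^ (Suc j ^ 3)"
  proof -
    have "(Suc j)^2 + j^3 \<le> Suc j ^ 3" by (simp add: power2_eq_square power3_eq_cube algebra_simps)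
    then show ?thesis by (metis power_add power_increasing_iff one_less_numeral_iff semiring_norm(76) mult.commute)
  qed
  have c1: "card (fst (seqp m n A (Suc j))) \<le> 2 ^ (Suc j ^ 3)"
    using it Suc.IH ex unfolding \<epsilon>_def by (simp del: power_Suc) (meson le_trans mult_le_mono2)
  have c2: "card (snd (seqp m n A (Suc j))) \<le> 2 ^ (Suc j ^ 3)"
    using it Suc.IH ex unfolding \<epsilon>_def by (simp del: power_Suc) (meson le_trans mult_le_mono2)
  show ?case using it c1 c2 unfolding \<epsilon>_def by simp
qed


lemma seqp_step:
  assumes m: "m \<ge> 1" and n: "n \<ge> 1" and A: "max_norm m n A \<le> 1"
  shows "CN m n A (seqp m n A (Suc j)) \<le> 2 / real (Suc j)
    \<and> refines (fst (seqp m n A (Suc j))) (fst (seqp m n A j))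
    \<and> refines (snd (seqp m n A (Suc j))) (snd (seqp m n A j))"
proof -
  define \<epsilon> where "\<epsilon> = 2 / real (Suc j)"
  have e: "\<epsilon> > 0" unfolding \<epsilon>_def by simp
  define s where "s = seqp m n A j"
  have v: "valid m n s" using seqp_props[OF m n A] unfolding s_def by blast
  note it = stp_iter[OF v m n e, where A=A and k="(Suc j)^2"]
  have eq: "seqp m n A (Suc j) = (stp m n A \<epsilon> ^^ (Suc j)^2) s" unfolding s_def \<epsilon>_def by simp
  have Ab: "\<And>i k. i < m \<Longrightarrow> k < n \<Longrightarrow> \<bar>A i k\<bar> \<le> 1" using maxnorm_entry[OF A] by blast
  have mn: "real m * real n > 0" using m n by simp
  have cn: "CN m n A ((stp m n A \<epsilon> ^^ (Suc j)^2) s) \<le> \<epsilon>"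
  proof (rule ccontr)
    assume "\<not> ?thesis"
    then have E: "En m n A ((stp m n A \<epsilon> ^^ (Suc j)^2) s) \<ge> En m n A s + real ((Suc j)^2) * (\<epsilon>^2 * (real m * real n))"
      using it by blast
    have k: "real ((Suc j)^2) * \<epsilon>^2 = 4"
    proof -
      have "real (Suc j) > 0" by simp
      then show ?thesis unfolding \<epsilon>_def of_nat_power by (simp add: power_divide power2_eq_square)
    qed
    have E0: "En m n A s \<ge> 0" unfolding En_def by (rule ip_nonneg)
    have v2: "valid m n ((stp m n A \<epsilon> ^^ (Suc j)^2) s)" using it by blast
    have E1: "En m n A ((stp m n A \<epsilon> ^^ (Suc j)^2) s) \<le> real m * real n"
      unfolding En_def using v2 unfolding valid_def by (intro energy_bound Ab) auto
    have "real ((Suc j)^2) * (\<epsilon>^2 * (real m * real n)) = 4 * (real m * real n)"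
      using k by (simp add: mult.assoc[symmetric])
    then show False using E E0 E1 mn by linarith
  qed
  have r: "refines (fst ((stp m n A \<epsilon> ^^ (Suc j)^2) s)) (fst s)"
     "refines (snd ((stp m n A \<epsilon> ^^ (Suc j)^2) s)) (snd s)" using it by blast+
  show ?thesis using cn r unfolding eq[symmetric] \<epsilon>_def s_def by simp
qed

theorem lemma10p1:
  fixes m n :: nat and A :: "nat \<Rightarrow> nat \<Rightarrow> real"
  assumes "m \<ge> 1" and "n \<ge> 1"
  assumes "max_norm m n A \<le> 1"
  shows "\<exists>P Q :: nat \<Rightarrow> nat set set.
    (\<forall>j\<ge>1.
       partition_on {0..<m} (P j) \<and> partition_on {0..<n} (Q j) \<and>
       refines (P (j+1)) (P j) \<and> refines (Q (j+1)) (Q j) \<and>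
       real (card (P j)) \<le> (2 ^ (j+2) * real j) ^ (j^2) \<and>
       real (card (Q j)) \<le> (2 ^ (j+2) * real j) ^ (j^2) \<and>
       cut_norm m n (\<lambda>i k. A i k - block_avg (P j) (Q j) A i k)
         \<le> 2 / real j + 6 * real j ^ 3 / 2 ^ j)"
proof (intro exI allI impI)
  fix j :: nat assume j: "j \<ge> 1"
  then obtain j' where j': "j = Suc j'" by (metis Suc_le_D One_nat_def)
  let ?P = "\<lambda>j. fst (seqp m n A j)" and ?Q = "\<lambda>j. snd (seqp m n A j)"
  note pr = seqp_props[OF assms, of j]
  note st1 = seqp_step[OF assms, of j']
  note st2 = seqp_step[OF assms, of j]
  have bnd: "real (2 ^ (j^3)) \<le> (2 ^ (j+2) * real j) ^ (j^2)"
  proof -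
    have "real (2 ^ (j^3)) = (2 ^ j) ^ (j^2)" by (simp add: power_mult[symmetric] power3_eq_cube power2_eq_square)
    also have "\<dots> \<le> (2 ^ (j+2) * real j) ^ (j^2)"
    proof (rule power_mono)
      have "(2::real) ^ j \<le> 2 ^ (j+2)" by (rule power_increasing) auto
      also have "\<dots> \<le> 2 ^ (j+2) * real j" using j by simp
      finally show "(2::real) ^ j \<le> 2 ^ (j+2) * real j" .
    qed auto
    finally show ?thesis .
  qed
  have c1: "real (card (?P j)) \<le> (2 ^ (j+2) * real j) ^ (j^2)"
    using pr bnd by (meson of_nat_le_iff order_trans)
  have c2: "real (card (?Q j)) \<le> (2 ^ (j+2) * real j) ^ (j^2)"
    using pr bnd by (meson of_nat_le_iff order_trans)
  have cn: "cut_norm m n (\<lambda>i k. A i k - block_avg (?P j) (?Q j) A i k) \<le> 2 / real j"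
    using st1 unfolding CN_def j' by simp
  have "0 \<le> 6 * real j ^ 3 / 2 ^ j" by simp
  then have cn2: "cut_norm m n (\<lambda>i k. A i k - block_avg (?P j) (?Q j) A i k)
         \<le> 2 / real j + 6 * real j ^ 3 / 2 ^ j" using cn by linarith
  show "partition_on {0..<m} (?P j) \<and> partition_on {0..<n} (?Q j) \<and>
       refines (?P (j+1)) (?P j) \<and> refines (?Q (j+1)) (?Q j) \<and>
       real (card (?P j)) \<le> (2 ^ (j+2) * real j) ^ (j^2) \<and>
       real (card (?Q j)) \<le> (2 ^ (j+2) * real j) ^ (j^2) \<and>
       cut_norm m n (\<lambda>i k. A i k - block_avg (?P j) (?Q j) A i k)
         \<le> 2 / real j + 6 * real j ^ 3 / 2 ^ j"
    using pr st2 c1 c2 cn2 unfolding valid_def by simp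
qed

end
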